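(* Let $1\le s\le d$. Natural data $\bar x$ is uniform on $\{-1,1\}^d$; an augmentation $x\sim\mathcal{A}(\bar x)$ multiplies coordinate $j$ of $\bar x$ by an independent $\tau_j\sim\mathrm{Unif}[\tfrac12,1]$ for $j=s+1,\dots,d$ and keeps the first $s$ coordinates. Let $p_{\mathrm{data}}$ be the distribution of $x$ and $p_{\mathrm{pos}}$ the distribution of $(x,x^+)$, two independent augmentations of a common $\bar x$. The downstream task is $m$-way classification with label $y:\mathcal{X}\to[m]$ such that $y(x)=y(x')$ whenever $x_{1:s}=x'_{1:s}$. For $\lambda>0$ let $\mathcal{L}_\lambda(f)=\mathbb{E}_{(x,x^+)\sim p_{\mathrm{pos}}}[\|f(x)-f(x^+)\|_2^2]+\lambda\|\mathbb{E}_{x\sim p_{\mathrm{data}}}[f(x)f(x)^\top]-\mathbb{I}\|_F^2$. (1) Let $k=2^s$ and $\mathcal{F}_{\mathrm{ReLU}}=\{x\mapsto\sigma(Ux+b):U\in\mathbb{R}^{k\times d},b\in\mathbb{R}^k\}$ with $\sigma$ the entrywise ReLU. Let $\lambda>0$ and $\hat f\in\arg\min_{f\in\mathcal{F}_{\mathrm{ReLU}}}\mathcal{L}_\lambda(f)$. Then there exists $W\in\mathbb{R}^{m\times k}$ with $\mathbb{E}_{x\sim p_{\mathrm{data}}}[\|W\hat f(x)-e_{y(x)}\|_2^2]=0$. (2) Let $\mathcal{F}_{\mathrm{uni}}$ be the class of all functions $\mathbb{R}^d\to\mathbb{R}^k$. If $k\le2^{d-s}$, there exists $\hat f'\in\arg\min_{f\in\mathcal{F}_{\mathrm{uni}}}\mathcal{L}_\lambda(f)$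 such that every $W\in\mathbb{R}^{m\times k}$ satisfies $\mathbb{E}_{x\sim p_{\mathrm{data}}}[\|W\hat f'(x)-e_{y(x)}\|_2^2]\ge\frac12$.
   Context: $e_j\in\mathbb{R}^m$ denotes the $j$-th standard basis vector. *)

theory Defs
  imports "HOL-Probability.Probability"
begin

text \<open>Vectors in R^n are represented as functions nat \<Rightarrow> real, coordinates 0..n-1
  (coordinate j+1 of the paper is index j here); unused coordinates are irrelevant/zero.\<close>

definition cube :: "nat \<Rightarrow> (nat \<Rightarrow> real) set" where
  "cube d = {xb. (\<forall>j<d. xb j = -1 \<or> xb j = 1) \<and> (\<forall>j\<ge>d. xb j = 0)}"

definition tau_measure :: "nat \<Rightarrow> nat \<Rightarrow> (nat \<Rightarrow> real) measure" where
  "tau_measure s d = PiM {s..<d} (\<lambda>_. uniform_measure lborel {1/2..1::real})"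

definition aug :: "nat \<Rightarrow> nat \<Rightarrow> (nat \<Rightarrow> real) \<Rightarrow> (nat \<Rightarrow> real) \<Rightarrow> (nat \<Rightarrow> real)" where
  "aug s d xb \<tau> = (\<lambda>j. if j < s then xb j else if j < d then \<tau> j * xb j else 0)"

definition E_data :: "nat \<Rightarrow> nat \<Rightarrow> ((nat \<Rightarrow> real) \<Rightarrow> real) \<Rightarrow> real" where
  "E_data s d g = (\<Sum>xb\<in>cube d. \<integral>\<tau>. g (aug s d xb \<tau>) \<partial>tau_measure s d) / 2 ^ d"

definition E_pos :: "nat \<Rightarrow> nat \<Rightarrow> ((nat \<Rightarrow> real) \<Rightarrow> (nat \<Rightarrow> real) \<Rightarrow> real) \<Rightarrow> real" where
  "E_pos s d h = (\<Sum>xb\<in>cube d. \<integral>\<tau>. (\<integral>\<tau>'. h (aug s d xb \<tau>) (aug s d xb \<tau>') \<partial>tau_measure s d)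
       \<partial>tau_measure s d) / 2 ^ d"

definition loss :: "nat \<Rightarrow> nat \<Rightarrow> nat \<Rightarrow> real \<Rightarrow> ((nat \<Rightarrow> real) \<Rightarrow> (nat \<Rightarrow> real)) \<Rightarrow> real" where
  "loss s d k lam f =
     E_pos s d (\<lambda>x x'. \<Sum>i<k. (f x i - f x' i)^2)
     + lam * (\<Sum>i<k. \<Sum>j<k. (E_data s d (\<lambda>x. f x i * f x j) - (if i = j then 1 else 0))^2)"

text \<open>Functions R^d \<rightarrow> R^k for which the loss is well-defined: measurable with finite
  second moments under p_data.\<close>
definition admissible :: "nat \<Rightarrow> nat \<Rightarrow> nat \<Rightarrow> ((nat \<Rightarrow> real) \<Rightarrow> (nat \<Rightarrow> real)) \<Rightarrow> bool" where
  "admissible s d k f \<longleftrightarrow> (\<forall>xb\<in>cube d. \<forall>i<k.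
      (\<lambda>\<tau>. f (aug s d xb \<tau>) i) \<in> borel_measurable (tau_measure s d) \<and>
      integrable (tau_measure s d) (\<lambda>\<tau>. (f (aug s d xb \<tau>) i)^2))"

definition relu_net :: "nat \<Rightarrow> nat \<Rightarrow> (nat \<Rightarrow> nat \<Rightarrow> real) \<Rightarrow> (nat \<Rightarrow> real) \<Rightarrow> (nat \<Rightarrow> real) \<Rightarrow> (nat \<Rightarrow> real)" where
  "relu_net d k U b = (\<lambda>x i. if i < k then max 0 ((\<Sum>j<d. U i j * x j) + b i) else 0)"

definition F_relu :: "nat \<Rightarrow> nat \<Rightarrow> ((nat \<Rightarrow> real) \<Rightarrow> (nat \<Rightarrow> real)) set" where
  "F_relu d k = {relu_net d k U b | U b. True}"

definition down_err :: "nat \<Rightarrow> nat \<Rightarrow> nat \<Rightarrow> nat \<Rightarrow> ((nat \<Rightarrow> real) \<Rightarrow> nat) \<Rightarrow>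
    (nat \<Rightarrow> nat \<Rightarrow> real) \<Rightarrow> ((nat \<Rightarrow> real) \<Rightarrow> (nat \<Rightarrow> real)) \<Rightarrow> real" where
  "down_err s d k m y W f =
     E_data s d (\<lambda>x. \<Sum>i<m. ((\<Sum>j<k. W i j * f x j) - (if i = y x then 1 else 0))^2)"

end

theory Submission
  imports Defs
begin

abbreviation unif :: "real measure" where "unif \<equiv> uniform_measure lborel {1/2..1::real}"

lemma unif_prob: "prob_space unif"
  by (rule prob_space_uniform_measure) auto

lemma tau_prob: "prob_space (tau_measure s d)"
  unfolding tau_measure_def by (rule prob_space_PiM) (rule unif_prob)

lemma AE_box: "AE \<tau> in tau_measure s d. \<forall>j\<in>{s..<d}. 1/2 \<le> \<tau> j \<and> \<tau> j \<le> 1"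
proof (rule AE_finite_allI)
  fix j assume j: "j \<in> {s..<d}"
  have "AE t in unif. 1/2 \<le> t \<and> t \<le> 1"
    by (rule AE_uniform_measureI) auto
  then show "AE \<tau> in tau_measure s d. 1/2 \<le> \<tau> j \<and> \<tau> j \<le> 1"
    unfolding tau_measure_def using j
    by (intro AE_PiM_component[where P="\<lambda>t. 1/2 \<le> t \<and> t \<le> 1"]) (auto intro: unif_prob)
qed simp

lemma aug_meas: "(\<lambda>\<tau>. aug s d xb \<tau> j) \<in> borel_measurable (tau_measure s d)"
proof (cases "j < s")
  case True then show ?thesis by (simp add: aug_def)
next
  case False
  show ?thesis
  proof (cases "j < d")
    case True
    then have "j \<in> {s..<d}" using False by auto
    then show ?thesis using False True unfolding aug_def tau_measure_def by measurable
  next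
    case False2: False
    then show ?thesis using False by (simp add: aug_def)
  qed
qed

lemma hyper_point:
  fixes a p :: "nat \<Rightarrow> real"
  assumes p: "\<forall>l\<in>{s..<d}. 5/8 \<le> p l \<and> p l \<le> 7/8"
    and ne: "c + (\<Sum>l\<in>{s..<d}. a l * p l) \<noteq> v"
    and ae: "AE \<tau> in tau_measure s d. c + (\<Sum>l\<in>{s..<d}. a l * \<tau> l) = v"
  shows False
proof -
  define I where "I = {s..<d}"
  define L where "L = (\<lambda>\<tau>::nat\<Rightarrow>real. c + (\<Sum>l\<in>I. a l * \<tau> l))"
  define e where "e = \<bar>L p - v\<bar>"
  define A where "A = (\<Sum>l\<in>I. \<bar>a l\<bar>) + 1"
  define \<epsilon> where "\<epsilon> = min (1/8) (e / (2*A))"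
  have e0: "e > 0" using ne unfolding e_def L_def I_def by auto
  have A1: "A \<ge> 1" unfolding A_def by (simp add: sum_nonneg)
  have \<epsilon>0: "\<epsilon> > 0" using e0 A1 unfolding \<epsilon>_def by auto
  have \<epsilon>A: "A * \<epsilon> \<le> e/2"
  proof -
    have "\<epsilon> \<le> e/(2*A)" by (simp add: \<epsilon>_def)
    then have "A*\<epsilon> \<le> A*(e/(2*A))" using A1 by (intro mult_left_mono) auto
    also have "\<dots> = e/2" using A1 by (simp add: field_simps)
    finally show ?thesis .
  qed
  define B where "B = PiE I (\<lambda>l. {p l - \<epsilon> .. p l + \<epsilon>})"
  interpret P: prob_space "tau_measure s d" by (rule tau_prob)
  interpret U: prob_space unif by (rule unif_prob)
  interpret PS: product_sigma_finite "\<lambda>_. unif" by standard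
  have fin: "finite I" unfolding I_def by simp
  have Bm: "emeasure (tau_measure s d) B = (\<Prod>l\<in>I. emeasure unif {p l - \<epsilon> .. p l + \<epsilon>})"
    unfolding tau_measure_def B_def I_def[symmetric] by (rule PS.emeasure_PiM[OF fin]) auto
  have "emeasure unif {p l - \<epsilon> .. p l + \<epsilon>} \<noteq> 0" if "l \<in> I" for l
  proof -
    have pl: "5/8 \<le> p l" "p l \<le> 7/8" using p that unfolding I_def by auto
    have "\<epsilon> \<le> 1/8" by (simp add: \<epsilon>_def)
    then have sub: "{p l - \<epsilon> .. p l + \<epsilon>} \<subseteq> {1/2..1}" using pl by auto
    then have "{1/2..1::real} \<inter> {p l - \<epsilon> .. p l + \<epsilon>} = {p l - \<epsilon> .. p l + \<epsilon>}" by auto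
    then show ?thesis using \<epsilon>0 by (simp add: ennreal_divide_eq_0_iff)
  qed
  then have Bne: "emeasure (tau_measure s d) B \<noteq> 0" using Bm fin by (simp add: prod_zero_iff)
  have notP: "L \<tau> \<noteq> v" if "\<tau> \<in> B" for \<tau>
  proof -
    have "\<bar>L \<tau> - L p\<bar> = \<bar>\<Sum>l\<in>I. a l * (\<tau> l - p l)\<bar>" unfolding L_def
      by (simp add: sum_subtractf[symmetric] algebra_simps)
    also have "\<dots> \<le> (\<Sum>l\<in>I. \<bar>a l * (\<tau> l - p l)\<bar>)" by (rule sum_abs)
    also have "\<dots> \<le> (\<Sum>l\<in>I. \<bar>a l\<bar> * \<epsilon>)"
    proof (rule sum_mono)
      fix l assume "l \<in> I"
      then have "\<tau> l \<in> {p l - \<epsilon> .. p l + \<epsilon>}" using that unfolding B_def by (auto simp: PiE_iff)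
      then have "\<bar>\<tau> l - p l\<bar> \<le> \<epsilon>" by auto
      then show "\<bar>a l * (\<tau> l - p l)\<bar> \<le> \<bar>a l\<bar> * \<epsilon>" by (simp add: abs_mult mult_left_mono)
    qed
    also have "\<dots> \<le> A * \<epsilon>" unfolding A_def using \<epsilon>0 by (simp add: sum_distrib_right[symmetric])
    finally show ?thesis using \<epsilon>A e0 unfolding e_def by auto
  qed
  from ae have "AE \<tau> in tau_measure s d. L \<tau> = v" unfolding L_def I_def .
  then obtain N where N: "{x \<in> space (tau_measure s d). \<not> L x = v} \<subseteq> N" "N \<in> sets (tau_measure s d)"
     "emeasure (tau_measure s d) N = 0" by (auto elim: AE_E)
  have "B \<subseteq> space (tau_measure s d)" unfolding B_def tau_measure_def I_def by (auto simp: space_PiM PiE_iff)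
  then have "B \<subseteq> N" using N(1) notP by auto
  then have "emeasure (tau_measure s d) B \<le> 0" using N by (metis emeasure_mono)
  then show False using Bne by simp
qed

lemma hyper:
  fixes a :: "nat \<Rightarrow> real"
  assumes ae: "AE \<tau> in tau_measure s d. c + (\<Sum>l\<in>{s..<d}. a l * \<tau> l) = v"
    and j: "j \<in> {s..<d}"
  shows "a j = 0"
proof (rule ccontr)
  assume aj: "a j \<noteq> 0"
  define p1 where "p1 = (\<lambda>l::nat. 3/4::real)"
  define p2 where "p2 = p1(j := 7/8)"
  have "(\<Sum>l\<in>{s..<d}. a l * p2 l) = (\<Sum>l\<in>{s..<d}. a l * p1 l) + a j / 8"
  proof -
    have "(\<Sum>l\<in>{s..<d}. a l * p2 l) = (\<Sum>l\<in>{s..<d}. a l * p1 l + (if l = j then a j / 8 else 0))"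
      by (rule sum.cong) (auto simp: p1_def p2_def)
    also have "\<dots> = (\<Sum>l\<in>{s..<d}. a l * p1 l) + a j / 8" using j by (simp add: sum.distrib)
    finally show ?thesis .
  qed
  then have "c + (\<Sum>l\<in>{s..<d}. a l * p1 l) \<noteq> v \<or> c + (\<Sum>l\<in>{s..<d}. a l * p2 l) \<noteq> v" using aj by auto
  then show False
  proof
    assume "c + (\<Sum>l\<in>{s..<d}. a l * p1 l) \<noteq> v"
    then show False using hyper_point[OF _ _ ae, of p1] by (auto simp: p1_def)
  next
    assume "c + (\<Sum>l\<in>{s..<d}. a l * p2 l) \<noteq> v"
    moreover have "\<forall>l\<in>{s..<d}. 5/8 \<le> p2 l \<and> p2 l \<le> 7/8" by (auto simp: p1_def p2_def)
    ultimately show False using hyper_point[OF _ _ ae, of p2] by blast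
  qed
qed

lemma cube_card: "finite (cube n) \<and> card (cube n) = 2^n"
proof -
  define h where "h = (\<lambda>S j. if j < n then (if j \<in> S then 1 else -1) else (0::real))"
  have img: "cube n = h ` Pow {..<n}"
  proof
    show "h ` Pow {..<n} \<subseteq> cube n" unfolding h_def cube_def by auto
    show "cube n \<subseteq> h ` Pow {..<n}"
    proof
      fix xb assume xb: "xb \<in> cube n"
      have "xb = h {j. j < n \<and> xb j = 1}"
        using xb unfolding h_def cube_def by (auto intro!: ext)
      then show "xb \<in> h ` Pow {..<n}" by auto
    qed
  qed
  have inj: "inj_on h (Pow {..<n})"
  proof (rule inj_onI)
    fix S S' assume S: "S \<in> Pow {..<n}" "S' \<in> Pow {..<n}" "h S = h S'"
    have "j \<in> S \<longleftrightarrow> j \<in> S'" for j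
    proof (cases "j < n")
      case True
      have "h S j = h S' j" using S by simp
      then show ?thesis using True unfolding h_def by (auto split: if_splits)
    next
      case False then show ?thesis using S by auto
    qed
    then show "S = S'" by auto
  qed
  show ?thesis using img inj by (simp add: card_image card_Pow)
qed

lemma int_AE_const:
  fixes g :: "(nat \<Rightarrow> real) \<Rightarrow> real"
  assumes "g \<in> borel_measurable (tau_measure s d)" "AE \<tau> in tau_measure s d. g \<tau> = c"
  shows "(\<integral>\<tau>. g \<tau> \<partial>tau_measure s d) = c"
proof -
  interpret P: prob_space "tau_measure s d" by (rule tau_prob)
  have "(\<integral>\<tau>. g \<tau> \<partial>tau_measure s d) = (\<integral>\<tau>. c \<partial>tau_measure s d)"
    by (rule integral_cong_AE) (use assms in auto)
  also have "\<dots> = c" using P.prob_space by simp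
  finally show ?thesis .
qed

lemma AE_ex:
  assumes "AE \<tau> in tau_measure s d. P \<tau>" shows "\<exists>\<tau>. P \<tau>"
proof -
  interpret P: prob_space "tau_measure s d" by (rule tau_prob)
  show ?thesis
  proof (rule ccontr)
    assume "\<not> ?thesis"
    then have "AE \<tau> in tau_measure s d. False" using assms by auto
    then show False by (simp add: P.AE_False)
  qed
qed

lemma E_pos_nonneg: "(\<And>x x'. h x x' \<ge> 0) \<Longrightarrow> E_pos s d h \<ge> 0"
  unfolding E_pos_def by (intro divide_nonneg_pos sum_nonneg integral_nonneg) auto

lemma loss_nonneg: "lam \<ge> 0 \<Longrightarrow> loss s d k lam f \<ge> 0"
  unfolding loss_def by (intro add_nonneg_nonneg E_pos_nonneg mult_nonneg_nonneg sum_nonneg) auto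

lemma aug_first: "j < s \<Longrightarrow> aug s d xb \<tau> j = xb j"
  by (simp add: aug_def)

lemma aug_box_sgn:
  assumes xb: "xb \<in> cube d" and box: "\<forall>j\<in>{s..<d}. 1/2 \<le> \<tau> j \<and> \<tau> j \<le> 1"
  shows "sgn (aug s d xb \<tau> j) = xb j"
proof -
  have "sgn (xb j) = xb j" using xb unfolding cube_def by (cases "j < d") auto
  moreover have "j < d \<Longrightarrow> \<tau> j > 0 \<or> j < s" using box[rule_format, of j] by force
  ultimately show ?thesis unfolding aug_def using xb unfolding cube_def
    by (auto simp: sgn_mult)
qed

lemma aug_box_abs:
  assumes xb: "xb \<in> cube d" and box: "\<forall>j\<in>{s..<d}. 1/2 \<le> \<tau> j \<and> \<tau> j \<le> 1"
  shows "\<bar>aug s d xb \<tau> j\<bar> \<le> 1"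
proof -
  have "\<bar>xb j\<bar> \<le> 1" using xb unfolding cube_def by (cases "j < d") auto
  moreover have "j < d \<Longrightarrow> \<not> j < s \<Longrightarrow> \<bar>\<tau> j\<bar> \<le> 1" using box[rule_format, of j] by force
  ultimately show ?thesis unfolding aug_def
    by (auto simp: abs_mult) (metis abs_ge_zero mult_le_one)
qed

declare aug_meas[measurable]

lemma y_aug:
  assumes "\<And>x x'. (\<forall>j<s. x j = x' j) \<Longrightarrow> y x = y x'"
  shows "y (aug s d xb \<tau>) = y xb"
  using assms[of "aug s d xb \<tau>" xb] by (simp add: aug_first)

lemma part2:
  fixes s d m k :: nat and lam :: real and y :: "(nat \<Rightarrow> real) \<Rightarrow> nat"
  assumes "1 \<le> s" and "s \<le> d" and "lam > 0"
    and ym: "\<And>x. y x < m"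
    and yinv: "\<And>x x'. (\<forall>j<s. x j = x' j) \<Longrightarrow> y x = y x'"
    and k: "k \<le> 2^(d-s)"
  shows "\<exists>f'. admissible s d k f' \<and> (\<forall>g. admissible s d k g \<longrightarrow> loss s d k lam f' \<le> loss s d k lam g)
              \<and> (\<forall>W. down_err s d k m y W f' \<ge> 1/2)"
proof -
  have k2: "2 * k \<le> 2^d"
  proof -
    have "(2::nat) \<le> 2^s" using power_increasing[of 1 s "2::nat"] \<open>1 \<le> s\<close> by simp
    then have "2 * k \<le> 2^s * 2^(d-s)" using k by (rule mult_le_mono)
    also have "\<dots> = 2^d" using \<open>s \<le> d\<close> by (simp add: power_add[symmetric])
    finally show ?thesis .
  qed
  have cd: "finite (cube d)" "card (cube d) = 2^d" using cube_card by auto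
  have "k \<le> card (cube d)" using k2 cd by simp
  then obtain B where B: "B \<subseteq> cube d" "card B = k" "finite B"
    by (metis obtain_subset_with_card_n)
  then obtain \<beta> where \<beta>: "bij_betw \<beta> {0..<k} B" using ex_bij_betw_nat_finite by blast
  have \<beta>c: "i < k \<Longrightarrow> \<beta> i \<in> cube d" for i using \<beta> B(1) by (auto simp: bij_betw_def)
  have \<beta>inj: "i < k \<Longrightarrow> j < k \<Longrightarrow> \<beta> i = \<beta> j \<Longrightarrow> i = j" for i j
    using \<beta> by (auto simp: bij_betw_def inj_on_def)
  have \<beta>B: "B = \<beta> ` {0..<k}" using \<beta> by (auto simp: bij_betw_def)
  define c :: real where "c = sqrt (2^d)"
  have c2: "c * c = 2^d" unfolding c_def by simp
  define f' where "f' = (\<lambda>(x::nat\<Rightarrow>real) i. if i < k \<and> (\<forall>j<d. sgn (x j) = \<beta> i j) then c else 0)"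
  define G where "G = (\<lambda>xb i. if i < k \<and> xb = \<beta> i then c else 0)"
  have key: "f' (aug s d xb \<tau>) i = G xb i"
    if xb: "xb \<in> cube d" and box: "\<forall>j\<in>{s..<d}. 1/2 \<le> \<tau> j \<and> \<tau> j \<le> 1" for xb \<tau> i
  proof (cases "i < k")
    case True
    have "(\<forall>j<d. sgn (aug s d xb \<tau> j) = \<beta> i j) \<longleftrightarrow> (\<forall>j<d. xb j = \<beta> i j)"
      using aug_box_sgn[OF xb box] by simp
    also have "\<dots> \<longleftrightarrow> xb = \<beta> i"
    proof
      assume a: "\<forall>j<d. xb j = \<beta> i j"
      show "xb = \<beta> i"
      proof
        fix j show "xb j = \<beta> i j"
          using a xb \<beta>c[OF True] unfolding cube_def by (cases "j < d") auto
      qed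
    qed simp
    finally show ?thesis unfolding f'_def G_def using True by simp
  next
    case False then show ?thesis unfolding f'_def G_def by simp
  qed
  have AEkey: "AE \<tau> in tau_measure s d. \<forall>i. f' (aug s d xb \<tau>) i = G xb i" if "xb \<in> cube d" for xb
    using AE_box by eventually_elim (use key that in auto)
  have meas: "(\<lambda>\<tau>. f' (aug s d xb \<tau>) i) \<in> borel_measurable (tau_measure s d)" for xb i
    unfolding f'_def by measurable
  have bound: "\<bar>f' x i\<bar> \<le> c" for x i unfolding f'_def c_def by auto
  have adm: "admissible s d k f'"
    unfolding admissible_def
  proof (intro ballI allI impI conjI)
    fix xb i
    show "(\<lambda>\<tau>. f' (aug s d xb \<tau>) i) \<in> borel_measurable (tau_measure s d)" by (rule meas)
    interpret P: prob_space "tau_measure s d" by (rule tau_prob)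
    show "integrable (tau_measure s d) (\<lambda>\<tau>. (f' (aug s d xb \<tau>) i)^2)"
    proof (rule P.integrable_const_bound[where B="c*c"])
      show "AE \<tau> in tau_measure s d. norm ((f' (aug s d xb \<tau>) i)^2) \<le> c*c"
        by (intro AE_I2) (auto simp: f'_def power2_eq_square)
    qed (use meas in measurable)
  qed
  have Epos: "E_pos s d (\<lambda>x x'. \<Sum>i<k. (f' x i - f' x' i)^2) = 0"
  proof -
    have "(\<integral>\<tau>. (\<integral>\<tau>'. (\<Sum>i<k. (f' (aug s d xb \<tau>) i - f' (aug s d xb \<tau>') i)^2) \<partial>tau_measure s d) \<partial>tau_measure s d) = 0"
      if xb: "xb \<in> cube d" for xb
    proof (rule integral_eq_zero_AE)
      show "AE \<tau> in tau_measure s d. (\<integral>\<tau>'. (\<Sum>i<k. (f' (aug s d xb \<tau>) i - f' (aug s d xb \<tau>') i)^2) \<partial>tau_measure s d) = 0"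
        using AEkey[OF xb]
      proof eventually_elim
        case (elim \<tau>)
        show ?case
        proof (rule integral_eq_zero_AE)
          show "AE \<tau>' in tau_measure s d. (\<Sum>i<k. (f' (aug s d xb \<tau>) i - f' (aug s d xb \<tau>') i)^2) = 0"
            using AEkey[OF xb] by eventually_elim (use elim in simp)
        qed
      qed
    qed
    then show ?thesis unfolding E_pos_def by simp
  qed
  have Edata: "E_data s d (\<lambda>x. f' x i * f' x j) = (if i = j then 1 else 0)" if ij: "i < k" "j < k" for i j
  proof -
    have "(\<integral>\<tau>. f' (aug s d xb \<tau>) i * f' (aug s d xb \<tau>) j \<partial>tau_measure s d) = G xb i * G xb j"
      if xb: "xb \<in> cube d" for xb
      by (rule int_AE_const) (use meas AEkey[OF xb] in auto)
    then have "E_data s d (\<lambda>x. f' x i * f' x j) = (\<Sum>xb\<in>cube d. G xb i * G xb j) / 2^d"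
      unfolding E_data_def by simp
    also have "(\<Sum>xb\<in>cube d. G xb i * G xb j) = (\<Sum>xb\<in>cube d. if xb = \<beta> i then (if i = j then c * c else 0) else 0)"
      by (rule sum.cong) (use ij \<beta>inj in \<open>auto simp: G_def\<close>)
    also have "\<dots> = (if i = j then c * c else 0)"
      using \<beta>c[OF ij(1)] cd(1) by (simp add: sum.delta)
    finally show ?thesis using c2 by simp
  qed
  have loss0: "loss s d k lam f' = 0"
    unfolding loss_def Epos using Edata by simp
  have minim: "\<forall>g. admissible s d k g \<longrightarrow> loss s d k lam f' \<le> loss s d k lam g"
    using loss0 loss_nonneg \<open>lam > 0\<close> by auto
  have err: "down_err s d k m y W f' \<ge> 1/2" for W
  proof -
    define Hc where "Hc = (\<lambda>xb. \<Sum>l<m. ((\<Sum>j<k. W l j * G xb j) - (if l = y xb then 1 else 0))^2)"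
    have int: "(\<integral>\<tau>. (\<Sum>l<m. ((\<Sum>j<k. W l j * f' (aug s d xb \<tau>) j) - (if l = y (aug s d xb \<tau>) then 1 else 0))^2) \<partial>tau_measure s d) = Hc xb"
      if xb: "xb \<in> cube d" for xb
    proof -
      have "(\<integral>\<tau>. (\<Sum>l<m. ((\<Sum>j<k. W l j * f' (aug s d xb \<tau>) j) - (if l = y (aug s d xb \<tau>) then 1 else 0))^2) \<partial>tau_measure s d)
         = (\<integral>\<tau>. (\<Sum>l<m. ((\<Sum>j<k. W l j * f' (aug s d xb \<tau>) j) - (if l = y xb then 1 else 0))^2) \<partial>tau_measure s d)"
        using yinv[of "aug s d xb _" xb] by (simp add: aug_first)
      also have "\<dots> = Hc xb"
        by (rule int_AE_const) (use meas AEkey[OF xb] in \<open>auto simp: Hc_def\<close>)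
      finally show ?thesis .
    qed
    have Hc0: "Hc xb \<ge> 0" for xb unfolding Hc_def by (auto intro: sum_nonneg)
    have Hc1: "Hc xb = 1" if "xb \<notin> B" for xb
    proof -
      have "G xb j = 0" if "j < k" for j using that \<open>xb \<notin> B\<close> \<beta>B by (auto simp: G_def)
      then have "Hc xb = (\<Sum>l<m. (if l = y xb then 1 else 0))" unfolding Hc_def
        by (intro sum.cong) auto
      also have "\<dots> = 1" using ym[of xb] by (simp add: sum.delta)
      finally show ?thesis .
    qed
    have e1: "down_err s d k m y W f' = (\<Sum>xb\<in>cube d. Hc xb) / 2^d"
      unfolding down_err_def E_data_def using int by simp
    have e2: "(\<Sum>xb\<in>cube d. Hc xb) \<ge> (\<Sum>xb\<in>cube d - B. Hc xb)"
      using cd(1) Hc0 by (intro sum_mono2) auto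
    have e3: "(\<Sum>xb\<in>cube d - B. Hc xb) = real (2^d - k)"
      using Hc1 B cd by (simp add: card_Diff_subset)
    have "down_err s d k m y W f' \<ge> real (2^d - k) / 2^d"
      unfolding e1 using e2 e3 by (simp add: divide_right_mono)
    moreover have "real (2^d - k) / 2^d \<ge> 1/2"
    proof -
      have "real (2 * k) \<le> real (2^d)" using k2 by (rule of_nat_mono)
      then show ?thesis using k2 by (simp add: field_simps of_nat_diff)
    qed
    ultimately show ?thesis by linarith
  qed
  show ?thesis using adm minim err by blast
qed

lemma inner_int:
  fixes F :: "'i \<Rightarrow> 'a \<Rightarrow> real"
  assumes P: "prob_space M" and fin: "finite I"
    and i1: "\<And>i. i \<in> I \<Longrightarrow> integrable M (F i)"
    and i2: "\<And>i. i \<in> I \<Longrightarrow> integrable M (\<lambda>x. (F i x)^2)"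
  shows "(\<integral>y. (\<Sum>i\<in>I. (a i - F i y)^2) \<partial>M) =
         (\<Sum>i\<in>I. (a i)^2 - 2 * a i * (\<integral>y. F i y \<partial>M) + (\<integral>y. (F i y)^2 \<partial>M))"
proof -
  interpret prob_space M by (rule P)
  have "(\<integral>y. (\<Sum>i\<in>I. (a i - F i y)^2) \<partial>M) = (\<integral>y. (\<Sum>i\<in>I. (a i)^2 - 2 * a i * F i y + (F i y)^2) \<partial>M)"
    by (simp add: power2_diff algebra_simps)
  also have "\<dots> = (\<Sum>i\<in>I. (\<integral>y. (a i)^2 - 2 * a i * F i y + (F i y)^2 \<partial>M))"
    by (rule Bochner_Integration.integral_sum) (use i1 i2 in auto)
  also have "\<dots> = (\<Sum>i\<in>I. (a i)^2 - 2 * a i * (\<integral>y. F i y \<partial>M) + (\<integral>y. (F i y)^2 \<partial>M))"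
  proof (rule sum.cong)
    fix i assume i: "i \<in> I"
    have "(\<integral>y. (a i)^2 - 2 * a i * F i y + (F i y)^2 \<partial>M) = (\<integral>y. (a i)^2 - 2 * a i * F i y \<partial>M) + (\<integral>y. (F i y)^2 \<partial>M)"
      by (rule Bochner_Integration.integral_add) (use i1 i2 i in auto)
    also have "(\<integral>y. (a i)^2 - 2 * a i * F i y \<partial>M) = (\<integral>y. (a i)^2 \<partial>M) - (\<integral>y. 2 * a i * F i y \<partial>M)"
      by (rule Bochner_Integration.integral_diff) (use i1 i2 i in auto)
    also have "(\<integral>y. 2 * a i * F i y \<partial>M) = 2 * a i * (\<integral>y. F i y \<partial>M)" by simp
    finally show "(\<integral>y. (a i)^2 - 2 * a i * F i y + (F i y)^2 \<partial>M) = (a i)^2 - 2 * a i * (\<integral>y. F i y \<partial>M) + (\<integral>y. (F i y)^2 \<partial>M)"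
      by (simp add: prob_space)
  qed simp
  finally show ?thesis .
qed

lemma var_sum:
  fixes F :: "'i \<Rightarrow> 'a \<Rightarrow> real"
  assumes P: "prob_space M" and fin: "finite I"
    and i1: "\<And>i. i \<in> I \<Longrightarrow> integrable M (F i)"
    and i2: "\<And>i. i \<in> I \<Longrightarrow> integrable M (\<lambda>x. (F i x)^2)"
  shows "(\<integral>x. (\<integral>y. (\<Sum>i\<in>I. (F i x - F i y)^2) \<partial>M) \<partial>M) =
         (\<Sum>i\<in>I. 2 * ((\<integral>y. (F i y)^2 \<partial>M) - (\<integral>y. F i y \<partial>M)^2))"
proof -
  interpret prob_space M by (rule P)
  define \<mu> where "\<mu> i = (\<integral>y. F i y \<partial>M)" for i
  define m2 where "m2 i = (\<integral>y. (F i y)^2 \<partial>M)" for i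
  have "(\<integral>x. (\<integral>y. (\<Sum>i\<in>I. (F i x - F i y)^2) \<partial>M) \<partial>M) =
        (\<integral>x. (\<Sum>i\<in>I. (F i x)^2 - 2 * F i x * \<mu> i + m2 i) \<partial>M)"
  proof -
    have "(\<integral>y. (\<Sum>i\<in>I. (F i x - F i y)^2) \<partial>M) = (\<Sum>i\<in>I. (F i x)^2 - 2 * F i x * \<mu> i + m2 i)" for x
      using inner_int[OF P fin i1 i2, where a="\<lambda>i. F i x"] unfolding \<mu>_def m2_def by simp
    then show ?thesis by simp
  qed
  also have "\<dots> = (\<Sum>i\<in>I. (\<integral>x. (F i x)^2 - 2 * F i x * \<mu> i + m2 i \<partial>M))"
    by (rule Bochner_Integration.integral_sum) (use i1 i2 in auto)
  also have "\<dots> = (\<Sum>i\<in>I. 2 * (m2 i - (\<mu> i)^2))"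
  proof (rule sum.cong)
    fix i assume i: "i \<in> I"
    have "(\<integral>x. (F i x)^2 - 2 * F i x * \<mu> i + m2 i \<partial>M) = (\<integral>x. (F i x)^2 - 2 * F i x * \<mu> i \<partial>M) + (\<integral>x. m2 i \<partial>M)"
      by (rule Bochner_Integration.integral_add) (use i1 i2 i in auto)
    also have "(\<integral>x. (F i x)^2 - 2 * F i x * \<mu> i \<partial>M) = m2 i - (\<integral>x. 2 * F i x * \<mu> i \<partial>M)"
      unfolding m2_def by (rule Bochner_Integration.integral_diff) (use i1 i2 i in auto)
    also have "(\<integral>x. 2 * F i x * \<mu> i \<partial>M) = 2 * \<mu> i * \<mu> i"
      unfolding \<mu>_def by (simp add: mult.commute mult.left_commute)
    finally show "(\<integral>x. (F i x)^2 - 2 * F i x * \<mu> i + m2 i \<partial>M) = 2 * (m2 i - (\<mu> i)^2)"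
      by (simp add: prob_space power2_eq_square)
  qed simp
  finally show ?thesis unfolding \<mu>_def m2_def .
qed

lemma var_nonneg_zero:
  fixes F :: "'a \<Rightarrow> real"
  assumes P: "prob_space M"
    and i1: "integrable M F" and i2: "integrable M (\<lambda>x. (F x)^2)"
  shows "(\<integral>y. (F y)^2 \<partial>M) - (\<integral>y. F y \<partial>M)^2 = (\<integral>y. (F y - (\<integral>y. F y \<partial>M))^2 \<partial>M)"
    and "(\<integral>y. (F y)^2 \<partial>M) - (\<integral>y. F y \<partial>M)^2 \<ge> 0"
    and "(\<integral>y. (F y)^2 \<partial>M) - (\<integral>y. F y \<partial>M)^2 = 0 \<Longrightarrow> AE y in M. F y = (\<integral>y. F y \<partial>M)"
proof -
  interpret prob_space M by (rule P)
  define \<mu> where "\<mu> = (\<integral>y. F y \<partial>M)"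
  have "(\<integral>y. (F y - \<mu>)^2 \<partial>M) = (\<integral>y. (\<Sum>i\<in>{()}. (\<mu> - F y)^2) \<partial>M)"
    by (simp add: power2_commute)
  also have "\<dots> = \<mu>^2 - 2 * \<mu> * \<mu> + (\<integral>y. (F y)^2 \<partial>M)"
    using inner_int[OF P, where I="{()}" and F="\<lambda>_. F" and a="\<lambda>_. \<mu>"] i1 i2 unfolding \<mu>_def by simp
  finally have eq: "(\<integral>y. (F y)^2 \<partial>M) - \<mu>^2 = (\<integral>y. (F y - \<mu>)^2 \<partial>M)" by (simp add: power2_eq_square)
  then show "(\<integral>y. (F y)^2 \<partial>M) - (\<integral>y. F y \<partial>M)^2 = (\<integral>y. (F y - (\<integral>y. F y \<partial>M))^2 \<partial>M)"
    unfolding \<mu>_def .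
  have ii: "integrable M (\<lambda>y. (F y - \<mu>)^2)"
    using i1 i2 by (simp add: power2_diff)
  show "(\<integral>y. (F y)^2 \<partial>M) - (\<integral>y. F y \<partial>M)^2 \<ge> 0"
    using eq unfolding \<mu>_def by simp
  assume "(\<integral>y. (F y)^2 \<partial>M) - (\<integral>y. F y \<partial>M)^2 = 0"
  then have "(\<integral>y. (F y - \<mu>)^2 \<partial>M) = 0" using eq unfolding \<mu>_def by simp
  then have "AE y in M. (F y - \<mu>)^2 = 0"
    using integral_nonneg_eq_0_iff_AE[OF ii] by simp
  then show "AE y in M. F y = (\<integral>y. F y \<partial>M)" unfolding \<mu>_def by eventually_elim simp
qed

lemma int_const: "(\<integral>\<tau>. (K::real) \<partial>tau_measure s d) = K"
proof -
  interpret P: prob_space "tau_measure s d" by (rule tau_prob)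
  show ?thesis using P.prob_space by simp
qed

lemma pre_split:
  assumes "s \<le> d"
  shows "(\<Sum>j<d. U i j * aug s d xb \<tau> j) = (\<Sum>j<s. U i j * xb j) + (\<Sum>j\<in>{s..<d}. (U i j * xb j) * \<tau> j)"
proof -
  have "(\<Sum>j<d. U i j * aug s d xb \<tau> j) = (\<Sum>j\<in>{0..<s}. U i j * aug s d xb \<tau> j) + (\<Sum>j\<in>{s..<d}. U i j * aug s d xb \<tau> j)"
    using assms by (simp add: lessThan_atLeast0 sum.atLeastLessThan_concat)
  also have "(\<Sum>j\<in>{0..<s}. U i j * aug s d xb \<tau> j) = (\<Sum>j<s. U i j * xb j)"
    by (simp add: lessThan_atLeast0 aug_def)
  also have "(\<Sum>j\<in>{s..<d}. U i j * aug s d xb \<tau> j) = (\<Sum>j\<in>{s..<d}. (U i j * xb j) * \<tau> j)"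
    by (rule sum.cong) (auto simp: aug_def)
  finally show ?thesis .
qed

lemma relu_aug:
  assumes "s \<le> d" "i < k"
  shows "relu_net d k U b (aug s d xb \<tau>) i = max 0 (((\<Sum>j<s. U i j * xb j) + b i) + (\<Sum>j\<in>{s..<d}. (U i j * xb j) * \<tau> j))"
  using pre_split[OF assms(1), of U i xb \<tau>] assms(2) unfolding relu_net_def by (simp add: add.commute add.left_commute)

lemma match_sum:
  assumes xb: "xb \<in> cube d" and p: "p \<in> cube s" and sd: "s \<le> d"
  shows "(\<forall>j<s. xb j = p j) \<Longrightarrow> (\<Sum>j<s. p j * xb j) = real s"
    and "\<not> (\<forall>j<s. xb j = p j) \<Longrightarrow> (\<Sum>j<s. p j * xb j) \<le> real s - 2"
proof -
  have xb1: "j < s \<Longrightarrow> xb j = 1 \<or> xb j = -1" for j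
  proof -
    assume "j < s" then have "j < d" using sd by simp
    then show ?thesis using xb unfolding cube_def by auto
  qed
  have p1: "j < s \<Longrightarrow> p j = 1 \<or> p j = -1" for j using p unfolding cube_def by auto
  show "(\<forall>j<s. xb j = p j) \<Longrightarrow> (\<Sum>j<s. p j * xb j) = real s"
  proof -
    assume a: "\<forall>j<s. xb j = p j"
    have "(\<Sum>j<s. p j * xb j) = (\<Sum>j<s. 1)"
      by (rule sum.cong) (use a p1 in force)+
    then show ?thesis by simp
  qed
  show "\<not> (\<forall>j<s. xb j = p j) \<Longrightarrow> (\<Sum>j<s. p j * xb j) \<le> real s - 2"
  proof -
    assume "\<not> (\<forall>j<s. xb j = p j)"
    then obtain j0 where j0: "j0 < s" "xb j0 \<noteq> p j0" by auto
    have t0: "p j0 * xb j0 = -1" using xb1[OF j0(1)] p1[OF j0(1)] j0(2) by auto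
    have "(\<Sum>j<s. p j * xb j) = p j0 * xb j0 + (\<Sum>j\<in>{..<s} - {j0}. p j * xb j)"
      using j0(1) by (simp add: sum.remove)
    also have "(\<Sum>j\<in>{..<s} - {j0}. p j * xb j) \<le> (\<Sum>j\<in>{..<s} - {j0}. 1)"
      by (rule sum_mono) (use xb1 p1 in force)
    also have "(\<Sum>j\<in>{..<s} - {j0}. (1::real)) = real s - 1" using j0(1) by simp
    finally show ?thesis using t0 by simp
  qed
qed

lemma tau_space1[simp]: "measure (tau_measure s d) (space (tau_measure s d)) = 1"
proof -
  interpret P: prob_space "tau_measure s d" by (rule tau_prob)
  show ?thesis using P.prob_space by simp
qed

lemma cube_eq:
  assumes "p \<in> cube s" "q \<in> cube s" "\<forall>j<s. p j = q j" shows "p = q"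
proof
  fix j show "p j = q j" using assms unfolding cube_def by (cases "j < s") auto
qed

lemma relu_zero:
  assumes "1 \<le> s" "s \<le> d" "lam \<ge> 0"
  shows "\<exists>g\<in>F_relu d (2^s). loss s d (2^s) lam g = 0"
proof -
  define k :: nat where "k = 2^s"
  have cs: "finite (cube s)" "card (cube s) = k" using cube_card k_def by auto
  obtain p where p: "bij_betw p {0..<k} (cube s)" using ex_bij_betw_nat_finite[OF cs(1)] cs(2) by auto
  have pc: "i < k \<Longrightarrow> p i \<in> cube s" for i using p by (auto simp: bij_betw_def)
  have pinj: "i < k \<Longrightarrow> j < k \<Longrightarrow> p i = p j \<Longrightarrow> i = j" for i j
    using p by (auto simp: bij_betw_def inj_on_def)
  define ext where "ext i = (\<lambda>j. if j < s then p i j else if j < d then 1 else (0::real))" for i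
  have extc: "ext i \<in> cube d" if "i < k" for i
    using pc[OF that] \<open>s \<le> d\<close> unfolding cube_def ext_def by auto
  define S where "S i = {xb \<in> cube d. \<forall>j<s. xb j = p i j}" for i
  define N where "N i = card (S i)" for i
  have cd: "finite (cube d)" using cube_card by auto
  have Npos: "N i > 0" if "i < k" for i
  proof -
    have "ext i \<in> S i" using extc[OF that] unfolding S_def ext_def by auto
    moreover have "finite (S i)" using cd unfolding S_def by auto
    ultimately show ?thesis unfolding N_def by (auto simp: card_gt_0_iff)
  qed
  define c where "c i = sqrt (2^d / real (N i))" for i
  have cpos: "c i > 0" if "i < k" for i using Npos[OF that] unfolding c_def by simp
  have cN: "c i * c i * real (N i) = 2^d" if "i < k" for i
    using Npos[OF that] unfolding c_def by simp
  define U0 where "U0 i j = (if j < s then c i * p i j else 0)" for i j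
  define b0 where "b0 i = - c i * (real s - 1)" for i
  define g where "g = relu_net d k U0 b0"
  define G0 where "G0 xb i = (if i < k \<and> (\<forall>j<s. xb j = p i j) then c i else 0)" for xb i
  have key: "g (aug s d xb \<tau>) i = G0 xb i" if xb: "xb \<in> cube d" for xb \<tau> i
  proof (cases "i < k")
    case True
    have "g (aug s d xb \<tau>) i = max 0 (((\<Sum>j<s. U0 i j * xb j) + b0 i) + (\<Sum>j\<in>{s..<d}. (U0 i j * xb j) * \<tau> j))"
      unfolding g_def by (rule relu_aug[OF \<open>s \<le> d\<close> True])
    also have "(\<Sum>j\<in>{s..<d}. (U0 i j * xb j) * \<tau> j) = 0" by (simp add: U0_def)
    also have "(\<Sum>j<s. U0 i j * xb j) = c i * (\<Sum>j<s. p i j * xb j)"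
      by (simp add: U0_def sum_distrib_left mult.assoc)
    finally have eq: "g (aug s d xb \<tau>) i = max 0 (c i * ((\<Sum>j<s. p i j * xb j) - (real s - 1)))"
      by (simp add: b0_def algebra_simps)
    show ?thesis
    proof (cases "\<forall>j<s. xb j = p i j")
      case m: True
      then show ?thesis using eq match_sum(1)[OF xb pc[OF True] \<open>s \<le> d\<close> m] cpos[OF True] True
        by (simp add: G0_def)
    next
      case m: False
      have "(\<Sum>j<s. p i j * xb j) - (real s - 1) < 0"
        using match_sum(2)[OF xb pc[OF True] \<open>s \<le> d\<close> m] by simp
      then have "c i * ((\<Sum>j<s. p i j * xb j) - (real s - 1)) < 0"
        using cpos[OF True] by (simp add: mult_pos_neg)
      then show ?thesis using eq m unfolding G0_def by auto
    qed
  next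
    case False then show ?thesis by (simp add: g_def relu_net_def G0_def)
  qed
  have Epos: "E_pos s d (\<lambda>x x'. \<Sum>i<k. (g x i - g x' i)^2) = 0"
    unfolding E_pos_def using key by simp
  have Edata: "E_data s d (\<lambda>x. g x i * g x j) = (if i = j then 1 else 0)" if ij: "i < k" "j < k" for i j
  proof -
    have "E_data s d (\<lambda>x. g x i * g x j) = (\<Sum>xb\<in>cube d. G0 xb i * G0 xb j) / 2^d"
      unfolding E_data_def using key by (simp add: int_const)
    also have "(\<Sum>xb\<in>cube d. G0 xb i * G0 xb j) = (if i = j then 2^d else 0)"
    proof (cases "i = j")
      case True
      have "(\<Sum>xb\<in>cube d. G0 xb i * G0 xb j) = (\<Sum>xb\<in>cube d. if xb \<in> S i then c i * c i else 0)"
        by (rule sum.cong) (use True ij in \<open>auto simp: G0_def S_def\<close>)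
      also have "\<dots> = (\<Sum>xb\<in>S i. c i * c i)"
        using cd by (simp add: sum.inter_filter[symmetric] S_def)
      also have "\<dots> = 2^d" using cN[OF ij(1)] by (simp add: N_def mult.commute)
      finally show ?thesis using True by simp
    next
      case False
      have "G0 xb i * G0 xb j = 0" if "xb \<in> cube d" for xb
      proof (rule ccontr)
        assume "G0 xb i * G0 xb j \<noteq> 0"
        then have "\<forall>l<s. xb l = p i l" "\<forall>l<s. xb l = p j l" by (auto simp: G0_def split: if_splits)
        then have "p i = p j" using cube_eq[OF pc[OF ij(1)] pc[OF ij(2)]] by auto
        then show False using pinj ij False by blast
      qed
      then have "(\<Sum>xb\<in>cube d. G0 xb i * G0 xb j) = 0" by (intro sum.neutral ballI)
      then show ?thesis using False by simp
    qed
    finally show ?thesis by simp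
  qed
  have "loss s d k lam g = 0" unfolding loss_def Epos using Edata by simp
  moreover have "g \<in> F_relu d k" unfolding F_relu_def g_def by blast
  ultimately show ?thesis unfolding k_def by blast
qed

lemma part1:
  fixes s d m :: nat and lam :: real and y :: "(nat \<Rightarrow> real) \<Rightarrow> nat"
  assumes "1 \<le> s" and sd: "s \<le> d" and lam: "lam > 0"
    and ym: "\<And>x. y x < m"
    and yinv: "\<And>x x'. (\<forall>j<s. x j = x' j) \<Longrightarrow> y x = y x'"
    and fF: "f \<in> F_relu d (2^s)"
    and fmin: "\<forall>g\<in>F_relu d (2^s). loss s d (2^s) lam f \<le> loss s d (2^s) lam g"
  shows "\<exists>W. down_err s d (2^s) m y W f = 0"
proof -
  define k :: nat where "k = 2^s"
  obtain U b where fdef: "f = relu_net d k U b" using fF unfolding F_relu_def k_def by auto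
  have cd: "finite (cube d)" "card (cube d) = 2^d" using cube_card by auto
  have cs: "finite (cube s)" "card (cube s) = k" using cube_card k_def by auto
  obtain g where "g \<in> F_relu d (2^s)" "loss s d (2^s) lam g = 0"
    using relu_zero[OF \<open>1 \<le> s\<close> sd, of lam] lam by auto
  then have "loss s d k lam f \<le> 0" using fmin k_def by force
  moreover have "loss s d k lam f \<ge> 0" using loss_nonneg lam by simp
  ultimately have loss0: "loss s d k lam f = 0" by simp
  define Pp where "Pp = E_pos s d (\<lambda>x x'. \<Sum>i<k. (f x i - f x' i)^2)"
  define Q where "Q = (\<Sum>i<k. \<Sum>j<k. (E_data s d (\<lambda>x. f x i * f x j) - (if i = j then 1 else 0))^2)"
  have Pp0: "Pp \<ge> 0" unfolding Pp_def by (rule E_pos_nonneg) (simp add: sum_nonneg)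
  have Q0: "Q \<ge> 0" unfolding Q_def by (intro sum_nonneg) simp
  have "Pp + lam * Q = 0" using loss0 unfolding loss_def Pp_def Q_def .
  moreover have "lam * Q \<ge> 0" using Q0 lam by simp
  ultimately have Pp00: "Pp = 0" "lam * Q = 0" using Pp0 by linarith+
  then have PpQ: "Pp = 0" "Q = 0" using lam by auto
  have Mid: "E_data s d (\<lambda>x. f x i * f x j) = (if i = j then 1 else 0)" if "i < k" "j < k" for i j
  proof -
    have "\<forall>i\<in>{..<k}. (\<Sum>j<k. (E_data s d (\<lambda>x. f x i * f x j) - (if i = j then 1 else 0))^2) = 0"
      using PpQ(2) unfolding Q_def by (subst (asm) sum_nonneg_eq_0_iff) (auto intro: sum_nonneg)
    then have "\<forall>j\<in>{..<k}. (E_data s d (\<lambda>x. f x i * f x j) - (if i = j then 1 else 0))^2 = 0"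
      using that by (subst (asm) sum_nonneg_eq_0_iff) auto
    then show ?thesis using that by auto
  qed
  define F where "F xb i \<tau> = f (aug s d xb \<tau>) i" for xb i \<tau>
  define Bd where "Bd i = (\<Sum>j<d. \<bar>U i j\<bar>) + \<bar>b i\<bar>" for i
  have meas: "F xb i \<in> borel_measurable (tau_measure s d)" for xb i
    unfolding F_def fdef relu_net_def by measurable
  have Fnn: "F xb i \<tau> \<ge> 0" for xb i \<tau> unfolding F_def fdef relu_net_def by auto
  have bnd: "\<bar>F xb i \<tau>\<bar> \<le> Bd i" if xb: "xb \<in> cube d" and box: "\<forall>j\<in>{s..<d}. 1/2 \<le> \<tau> j \<and> \<tau> j \<le> 1" for xb i \<tau>
  proof -
    have "\<bar>(\<Sum>j<d. U i j * aug s d xb \<tau> j) + b i\<bar> \<le> (\<Sum>j<d. \<bar>U i j * aug s d xb \<tau> j\<bar>) + \<bar>b i\<bar>"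
      using abs_triangle_ineq[of "\<Sum>j<d. U i j * aug s d xb \<tau> j" "b i"] sum_abs[of "\<lambda>j. U i j * aug s d xb \<tau> j" "{..<d}"]
      by linarith
    also have "(\<Sum>j<d. \<bar>U i j * aug s d xb \<tau> j\<bar>) \<le> (\<Sum>j<d. \<bar>U i j\<bar>)"
      by (rule sum_mono) (use aug_box_abs[OF xb box] in \<open>auto simp: abs_mult intro: mult_left_le\<close>)
    finally have "\<bar>(\<Sum>j<d. U i j * aug s d xb \<tau> j) + b i\<bar> \<le> Bd i" unfolding Bd_def by simp
    then show ?thesis unfolding F_def fdef relu_net_def by auto
  qed
  interpret P: prob_space "tau_measure s d" by (rule tau_prob)
  have AEbnd: "AE \<tau> in tau_measure s d. \<bar>F xb i \<tau>\<bar> \<le> Bd i" if "xb \<in> cube d" for xb i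
    using AE_box by eventually_elim (use bnd that in auto)
  have int1: "integrable (tau_measure s d) (F xb i)" if "xb \<in> cube d" for xb i
    by (rule P.integrable_const_bound[where B="Bd i"]) (use AEbnd[OF that] meas in auto)
  have int2: "integrable (tau_measure s d) (\<lambda>\<tau>. (F xb i \<tau>)^2)" if "xb \<in> cube d" for xb i
  proof (rule P.integrable_const_bound[where B="Bd i * Bd i"])
    show "AE \<tau> in tau_measure s d. norm ((F xb i \<tau>)^2) \<le> Bd i * Bd i"
      using AEbnd[OF that, of i]
    proof eventually_elim
      case (elim \<tau>)
      have "0 \<le> F xb i \<tau>" "F xb i \<tau> \<le> Bd i" using elim Fnn[of xb i \<tau>] by auto
      then have "F xb i \<tau> * F xb i \<tau> \<le> Bd i * Bd i" by (intro mult_mono) auto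
      then show ?case by (simp add: power2_eq_square)
    qed
  qed (use meas in measurable)
  define V where "V xb i = (\<integral>\<tau>. F xb i \<tau> \<partial>tau_measure s d)" for xb i
  define vr where "vr xb i = (\<integral>\<tau>. (F xb i \<tau>)^2 \<partial>tau_measure s d) - (V xb i)^2" for xb i
  have vr0: "vr xb i \<ge> 0" if "xb \<in> cube d" for xb i
    unfolding vr_def V_def using var_nonneg_zero(2)[OF tau_prob int1[OF that] int2[OF that]] .
  have D: "(\<integral>\<tau>. (\<integral>\<tau>'. (\<Sum>i<k. (f (aug s d xb \<tau>) i - f (aug s d xb \<tau>') i)^2) \<partial>tau_measure s d) \<partial>tau_measure s d)
      = (\<Sum>i<k. 2 * vr xb i)" if "xb \<in> cube d" for xb
    using var_sum[OF tau_prob, where I="{..<k}" and F="F xb"] int1[OF that] int2[OF that]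
    unfolding vr_def V_def F_def by simp
  have vrz: "vr xb i = 0" if xb: "xb \<in> cube d" and i: "i < k" for xb i
  proof -
    have "(\<Sum>xb\<in>cube d. (\<Sum>i<k. 2 * vr xb i)) = 0"
      using PpQ(1) D unfolding Pp_def E_pos_def by simp
    then have "\<forall>xb\<in>cube d. (\<Sum>i<k. 2 * vr xb i) = 0"
      using cd(1) vr0 by (subst (asm) sum_nonneg_eq_0_iff) (auto intro: sum_nonneg)
    then have "(\<Sum>i<k. 2 * vr xb i) = 0" using xb by blast
    then have "\<forall>i\<in>{..<k}. 2 * vr xb i = 0"
      using vr0[OF xb] by (subst (asm) sum_nonneg_eq_0_iff) auto
    then show ?thesis using i by simp
  qed
  have AEi: "AE \<tau> in tau_measure s d. F xb i \<tau> = V xb i" if xb: "xb \<in> cube d" and i: "i < k" for xb i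
    using var_nonneg_zero(3)[OF tau_prob int1[OF xb] int2[OF xb]] vrz[OF xb i] unfolding vr_def V_def by simp
  have AEV: "AE \<tau> in tau_measure s d. \<forall>i\<in>{..<k}. F xb i \<tau> = V xb i" if xb: "xb \<in> cube d" for xb
    by (rule AE_finite_allI) (use AEi[OF xb] in auto)
  have Vnn: "V xb i \<ge> 0" for xb i unfolding V_def using Fnn by (simp add: integral_nonneg)
  have Msum: "(\<Sum>xb\<in>cube d. V xb i * V xb j) = (if i = j then 2^d else 0)" if ij: "i < k" "j < k" for i j
  proof -
    have "(\<integral>\<tau>. f (aug s d xb \<tau>) i * f (aug s d xb \<tau>) j \<partial>tau_measure s d) = V xb i * V xb j"
      if xb: "xb \<in> cube d" for xb
    proof (rule int_AE_const)
      show "(\<lambda>\<tau>. f (aug s d xb \<tau>) i * f (aug s d xb \<tau>) j) \<in> borel_measurable (tau_measure s d)"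
        using meas[of xb i] meas[of xb j] unfolding F_def by measurable
      show "AE \<tau> in tau_measure s d. f (aug s d xb \<tau>) i * f (aug s d xb \<tau>) j = V xb i * V xb j"
        using AEV[OF xb] by eventually_elim (use ij in \<open>auto simp: F_def\<close>)
    qed
    then have "E_data s d (\<lambda>x. f x i * f x j) = (\<Sum>xb\<in>cube d. V xb i * V xb j) / 2^d"
      unfolding E_data_def by simp
    then show ?thesis using Mid[OF ij] by (auto split: if_splits)
  qed
  have active: "\<forall>j\<in>{s..<d}. U i j = 0" if xb: "xb \<in> cube d" and i: "i < k" and pos: "V xb i > 0" for xb i
  proof
    fix j assume j: "j \<in> {s..<d}"
    have "AE \<tau> in tau_measure s d. ((\<Sum>l<s. U i l * xb l) + b i) + (\<Sum>l\<in>{s..<d}. (U i l * xb l) * \<tau> l) = V xb i"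
      using AEi[OF xb i]
    proof eventually_elim
      case (elim \<tau>)
      then have "max 0 (((\<Sum>l<s. U i l * xb l) + b i) + (\<Sum>l\<in>{s..<d}. (U i l * xb l) * \<tau> l)) = V xb i"
        unfolding F_def fdef using relu_aug[OF sd i] by simp
      then show ?case using pos by (auto simp: max_def split: if_splits)
    qed
    then have "U i j * xb j = 0" by (rule hyper[OF _ j])
    moreover have "xb j \<noteq> 0" using xb j unfolding cube_def by auto
    ultimately show "U i j = 0" by simp
  qed
  have constV: "V xb' i = max 0 ((\<Sum>l<s. U i l * xb' l) + b i)"
    if z: "\<forall>j\<in>{s..<d}. U i j = 0" and i: "i < k" for xb' i
  proof -
    have "F xb' i \<tau> = max 0 ((\<Sum>l<s. U i l * xb' l) + b i)" for \<tau>
      unfolding F_def fdef using relu_aug[OF sd i] z by simp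
    then have "F xb' i = (\<lambda>_. max 0 ((\<Sum>l<s. U i l * xb' l) + b i))" by (intro ext)
    then show ?thesis unfolding V_def by (simp add: int_const)
  qed
  have pattern: "V xb' i = V xb'' i"
    if xb: "xb \<in> cube d" "V xb i > 0" and i: "i < k" and eq: "\<forall>l<s. xb' l = xb'' l" for xb xb' xb'' i
  proof -
    have z: "\<forall>j\<in>{s..<d}. U i j = 0" by (rule active[OF xb(1) i xb(2)])
    have "(\<Sum>l<s. U i l * xb' l) = (\<Sum>l<s. U i l * xb'' l)" using eq by (intro sum.cong) auto
    then show ?thesis using constV[OF z i, of xb'] constV[OF z i, of xb''] by simp
  qed
  have disj: "V xb i * V xb j = 0" if ij: "i < k" "j < k" "i \<noteq> j" and xb: "xb \<in> cube d" for xb i j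
  proof -
    have "(\<Sum>xb\<in>cube d. V xb i * V xb j) = 0" using Msum[OF ij(1,2)] ij(3) by simp
    then have "\<forall>xb\<in>cube d. V xb i * V xb j = 0"
      using cd(1) Vnn by (subst (asm) sum_nonneg_eq_0_iff) auto
    then show ?thesis using xb by blast
  qed
  have exi: "\<exists>xb. xb \<in> cube d \<and> V xb i > 0" if i: "i < k" for i
  proof (rule ccontr)
    assume "\<not> ?thesis"
    then have "\<forall>xb\<in>cube d. V xb i = 0" using Vnn by (metis less_eq_real_def)
    then have "(\<Sum>xb\<in>cube d. V xb i * V xb i) = 0" by simp
    then show False using Msum[OF i i] by simp
  qed
  define xi where "xi i = (SOME xb. xb \<in> cube d \<and> V xb i > 0)" for i
  have xi: "xi i \<in> cube d" "V (xi i) i > 0" if "i < k" for i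
    using someI_ex[OF exi[OF that]] unfolding xi_def by auto
  define restr where "restr x = (\<lambda>j. if j < s then x j else (0::real))" for x :: "nat \<Rightarrow> real"
  have restr_c: "restr x \<in> cube s" if "x \<in> cube d" for x
    using that sd unfolding restr_def cube_def by auto
  have restr_eq: "restr x = restr x' \<longleftrightarrow> (\<forall>l<s. x l = x' l)" for x x'
    unfolding restr_def by (auto simp: fun_eq_iff)
  define \<sigma> where "\<sigma> i = restr (xi i)" for i
  have \<sigma>inj: "inj_on \<sigma> {..<k}"
  proof (rule inj_onI)
    fix i j assume i: "i \<in> {..<k}" and j: "j \<in> {..<k}" and e: "\<sigma> i = \<sigma> j"
    show "i = j"
    proof (rule ccontr)
      assume ne: "i \<noteq> j"
      have "\<forall>l<s. xi j l = xi i l" using e restr_eq unfolding \<sigma>_def by metis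
      then have "V (xi j) i = V (xi i) i" using pattern[OF xi(1) xi(2), of i] i by auto
      then have "V (xi j) i > 0" using xi(2) i by simp
      moreover have "V (xi j) j > 0" using xi(2) j by simp
      ultimately have "V (xi j) i * V (xi j) j > 0" by simp
      then show False using disj[of i j "xi j"] i j ne xi(1) by auto
    qed
  qed
  have \<sigma>img: "\<sigma> ` {..<k} = cube s"
  proof (rule card_subset_eq[OF cs(1)])
    show "\<sigma> ` {..<k} \<subseteq> cube s" using restr_c xi(1) unfolding \<sigma>_def by auto
    show "card (\<sigma> ` {..<k}) = card (cube s)" using card_image[OF \<sigma>inj] cs(2) by simp
  qed
  define W where "W l i = (if l = y (xi i) then 1 / V (xi i) i else 0)" for l i
  have fit: "(\<Sum>l<m. ((\<Sum>j<k. W l j * V xb j) - (if l = y xb then 1 else 0))^2) = 0"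
    if xb: "xb \<in> cube d" for xb
  proof -
    obtain i where i: "i < k" "\<sigma> i = restr xb" using \<sigma>img restr_c[OF xb] by force
    have eqs: "\<forall>l<s. xi i l = xb l" using i(2) restr_eq unfolding \<sigma>_def by metis
    have Vi: "V xb i = V (xi i) i" using pattern[OF xi(1) xi(2), of i] i eqs by metis
    have Vpos: "V xb i > 0" using Vi xi(2)[OF i(1)] by simp
    have Vj: "V xb j = 0" if "j < k" "j \<noteq> i" for j
      using disj[of i j xb] that i Vpos xb by auto
    have yeq: "y (xi i) = y xb" using yinv eqs by blast
    have "(\<Sum>j<k. W l j * V xb j) = W l i * V xb i" for l
      using i(1) Vj by (subst sum.remove[of _ i]) (auto intro!: sum.neutral)
    then have "(\<Sum>j<k. W l j * V xb j) = (if l = y xb then 1 else 0)" for l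
      using Vi Vpos yeq unfolding W_def by auto
    then show ?thesis by simp
  qed
  have "down_err s d k m y W f = 0"
  proof -
    have "(\<integral>\<tau>. (\<Sum>l<m. ((\<Sum>j<k. W l j * f (aug s d xb \<tau>) j) - (if l = y (aug s d xb \<tau>) then 1 else 0))^2) \<partial>tau_measure s d) = 0"
      if xb: "xb \<in> cube d" for xb
    proof (rule integral_eq_zero_AE)
      show "AE \<tau> in tau_measure s d. (\<Sum>l<m. ((\<Sum>j<k. W l j * f (aug s d xb \<tau>) j) - (if l = y (aug s d xb \<tau>) then 1 else 0))^2) = 0"
        using AEV[OF xb]
      proof eventually_elim
        case (elim \<tau>)
        have "(\<Sum>j<k. W l j * f (aug s d xb \<tau>) j) = (\<Sum>j<k. W l j * V xb j)" for l
          using elim unfolding F_def by (intro sum.cong) auto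
        moreover have "y (aug s d xb \<tau>) = y xb" using yinv[of "aug s d xb \<tau>" xb] by (simp add: aug_first)
        ultimately show ?case using fit[OF xb] by simp
      qed
    qed
    then show ?thesis unfolding down_err_def E_data_def by simp
  qed
  then show ?thesis unfolding k_def by blast
qed

theorem theorem5:
  fixes s d m :: nat and lam :: real and y :: "(nat \<Rightarrow> real) \<Rightarrow> nat"
  assumes "1 \<le> s" and "s \<le> d" and "lam > 0"
    and "\<And>x. y x < m"
    and "\<And>x x'. (\<forall>j<s. x j = x' j) \<Longrightarrow> y x = y x'"
  shows
    "(\<forall>f\<in>F_relu d (2^s). (\<forall>g\<in>F_relu d (2^s). loss s d (2^s) lam f \<le> loss s d (2^s) lam g) \<longrightarrow>
        (\<exists>W. down_err s d (2^s) m y W f = 0))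
     \<and> (\<forall>k. k \<le> 2^(d-s) \<longrightarrow>
        (\<exists>f'. admissible s d k f' \<and> (\<forall>g. admissible s d k g \<longrightarrow> loss s d k lam f' \<le> loss s d k lam g)
              \<and> (\<forall>W. down_err s d k m y W f' \<ge> 1/2)))"
proof (intro conjI ballI impI allI)
  fix f assume "f \<in> F_relu d (2^s)" "\<forall>g\<in>F_relu d (2^s). loss s d (2^s) lam f \<le> loss s d (2^s) lam g"
  then show "\<exists>W. down_err s d (2^s) m y W f = 0"
    using part1[where y=y and s=s and d=d and m=m and lam=lam, OF assms] by blast
next
  fix k :: nat assume "k \<le> 2^(d-s)"
  then show "\<exists>f'. admissible s d k f' \<and> (\<forall>g. admissible s d k g \<longrightarrow> loss s d k lam f' \<le> loss s d k lam g)
              \<and> (\<forall>W. down_err s d k m y W f' \<ge> 1/2)"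
    using part2[where y=y and s=s and d=d and m=m and lam=lam, OF assms] by blast
qed

end
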